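(* Let $X$ be a CRSM on $E$ with extremal coefficient functional $\theta$, and let $K,K_1,K_2,\ldots\in\mathcal K$. Then $X(K_n)\to X(K)$ in probability as $n\to\infty$ if and only if $\theta(K_n)\to\theta(K)$ and $\theta(K_n\cup K)\to\theta(K)$.
   Context: $E$ is a locally compact Hausdorff second countable space; $\mathcal K$ its compact subsets. A sup-measure on $E$ is a Choquet capacity $\varphi$ (non-decreasing, $\varphi(\emptyset)=0$, $\varphi(A_n)\uparrow\varphi(A)$ if $A_n\uparrow A$, $\varphi(K_n)\downarrow\varphi(K)$ for compact $K_n\downarrow K$), finite on compacts, with $\varphi(\bigcup_j G_j)=\sup_j\varphi(G_j)$ for all families of open sets; a random sup-measure is a random element of the space of sup-measures (Borel $\sigma$-algebra of the sup-vague topology). $\mathrm{USC}$: bounded non-negative upper semicontinuous functions with relatively compact support. Extremal integral $\int^e f\,d\varphi=\sup\{\varphi(K)\inf_{x\in K}f(x):K\in\mathcal K\}$. Unit Fréchet with scale $a\ge0$: distribution function $\exp(-a/t)$, $t>0$. $X$ is max-stable if $\bigvee_iu_iX(K_i)$ is unit Fréchet for all $K_i\in\mathcal K$, $u_i\ge0$; tail dependence functional $\ell(f)$ = scale of $\int^e f\,dX$; extremal coefficient functional $\theta(K)=\ell(\mathbf 1_K)$. $X$ is a CRSM if it is max-stable and $\ell(f+g)=\ell(f)+\ell(g)$ for all $f,g\in\mathrm{USC}$ with $(f(x)-f(y))(g(x)-g(y))\ge0$ for all $x,y$. *)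

theory Defs
  imports "HOL-Probability.Probability"
begin

definition sup_measure :: "('a::topological_space set \<Rightarrow> ennreal) \<Rightarrow> bool" where
  "sup_measure \<phi> \<longleftrightarrow>
     \<phi> {} = 0
   \<and> (\<forall>A B. A \<subseteq> B \<longrightarrow> \<phi> A \<le> \<phi> B)
   \<and> (\<forall>A :: nat \<Rightarrow> 'a set. incseq A \<longrightarrow> (\<lambda>n. \<phi> (A n)) \<longlonglongrightarrow> \<phi> (\<Union>n. A n))
   \<and> (\<forall>K :: nat \<Rightarrow> 'a set. decseq K \<and> (\<forall>n. compact (K n))
        \<longrightarrow> (\<lambda>n. \<phi> (K n)) \<longlonglongrightarrow> \<phi> (\<Inter>n. K n))
   \<and> (\<forall>K. compact K \<longrightarrow> \<phi> K < \<top>)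
   \<and> (\<forall>\<G>. (\<forall>G\<in>\<G>. open G) \<longrightarrow> \<phi> (\<Union>\<G>) = (SUP G\<in>\<G>. \<phi> G))"

definition supvague_subbasis :: "('a::topological_space set \<Rightarrow> ennreal) set set" where
  "supvague_subbasis =
     {{m \<in> Collect sup_measure. m K < ennreal x} | K x. compact K}
   \<union> {{m \<in> Collect sup_measure. m G > ennreal x} | G x. open G}"

definition supvague_topology :: "('a::topological_space set \<Rightarrow> ennreal) topology" where
  "supvague_topology = topology_generated_by supvague_subbasis"

definition supmeasure_space :: "('a::topological_space set \<Rightarrow> ennreal) measure" where
  "supmeasure_space = sigma (Collect sup_measure) {U. openin supvague_topology U}"

definition random_supmeasure :: "'w measure \<Rightarrow> ('w \<Rightarrow> 'a::topological_space set \<Rightarrow> ennreal) \<Rightarrow> bool" where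
  "random_supmeasure M X \<longleftrightarrow> X \<in> M \<rightarrow>\<^sub>M supmeasure_space"

definition ext_integral :: "('a::topological_space set \<Rightarrow> ennreal) \<Rightarrow> ('a \<Rightarrow> real) \<Rightarrow> ennreal" where
  "ext_integral \<phi> f = (SUP K\<in>{K. compact K}. \<phi> K * (INF x\<in>K. ennreal (f x)))"

definition upper_semicont :: "('a::topological_space \<Rightarrow> real) \<Rightarrow> bool" where
  "upper_semicont f \<longleftrightarrow> (\<forall>x t. f x < t \<longrightarrow> (\<forall>\<^sub>F y in nhds x. f y < t))"

definition USC :: "('a::topological_space \<Rightarrow> real) set" where
  "USC = {f. bounded (range f) \<and> (\<forall>x. 0 \<le> f x) \<and> upper_semicont f
             \<and> compact (closure {x. f x \<noteq> 0})}"

definition frechet :: "'w measure \<Rightarrow> ('w \<Rightarrow> ennreal) \<Rightarrow> real \<Rightarrow> bool" where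
  "frechet M Y a \<longleftrightarrow> 0 \<le> a \<and> Y \<in> borel_measurable M
     \<and> (\<forall>t::real. t > 0 \<longrightarrow> measure M {\<omega> \<in> space M. Y \<omega> \<le> ennreal t} = exp (- a / t))"

definition max_stable :: "'w measure \<Rightarrow> ('w \<Rightarrow> 'a::topological_space set \<Rightarrow> ennreal) \<Rightarrow> bool" where
  "max_stable M X \<longleftrightarrow> random_supmeasure M X \<and>
     (\<forall>(n::nat) (K :: nat \<Rightarrow> 'a set) (u :: nat \<Rightarrow> real).
        (\<forall>i<n. compact (K i) \<and> 0 \<le> u i) \<longrightarrow>
        (\<exists>a. frechet M (\<lambda>\<omega>. SUP i\<in>{..<n}. ennreal (u i) * X \<omega> (K i)) a))"

definition tdf :: "'w measure \<Rightarrow> ('w \<Rightarrow> 'a::topological_space set \<Rightarrow> ennreal) \<Rightarrow> ('a \<Rightarrow> real) \<Rightarrow> real" where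
  "tdf M X f = (THE a. frechet M (\<lambda>\<omega>. ext_integral (X \<omega>) f) a)"

definition ecf :: "'w measure \<Rightarrow> ('w \<Rightarrow> 'a::topological_space set \<Rightarrow> ennreal) \<Rightarrow> 'a set \<Rightarrow> real" where
  "ecf M X K = tdf M X (indicator K)"

definition CRSM :: "'w measure \<Rightarrow> ('w \<Rightarrow> 'a::topological_space set \<Rightarrow> ennreal) \<Rightarrow> bool" where
  "CRSM M X \<longleftrightarrow> max_stable M X \<and>
     (\<forall>f\<in>USC. \<forall>g\<in>USC. (\<forall>x y. 0 \<le> (f x - f y) * (g x - g y)) \<longrightarrow>
        tdf M X (\<lambda>x. f x + g x) = tdf M X f + tdf M X g)"

definition conv_in_prob :: "'w measure \<Rightarrow> (nat \<Rightarrow> 'w \<Rightarrow> real) \<Rightarrow> ('w \<Rightarrow> real) \<Rightarrow> bool" where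
  "conv_in_prob M Y Z \<longleftrightarrow>
     (\<forall>\<epsilon>>0. (\<lambda>n. measure M {\<omega> \<in> space M. \<bar>Y n \<omega> - Z \<omega>\<bar> > \<epsilon>}) \<longlonglongrightarrow> 0)"

end

theory Submission
  imports Defs
begin


lemma haus_eucl: "Hausdorff_space (euclidean :: 'a::t2_space topology)"
  unfolding Hausdorff_space_def disjnt_def by (metis open_openin separation_t2)

lemma nbhd_compact_closure:
  fixes K :: "'a::t2_space set"
  assumes lc: "locally_compact_space (euclidean :: 'a topology)" and K: "compact K"
  obtains U where "open U" "K \<subseteq> U" "compact (closure U)"
proof -
  have "\<forall>K. compactin euclidean K \<longrightarrow> (\<exists>U L. openin euclidean U \<and> compactin euclidean L \<and> closedin euclidean L \<and> K \<subseteq> U \<and> U \<subseteq> (L::'a set))"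
    using lc locally_compact_space_compact_closed_compact[of "euclidean::'a topology"] haus_eucl
    by blast
  then obtain U L where "open U" "compact L" "closed L" "K \<subseteq> U" "U \<subseteq> L"
    using K by (auto simp: compactin_euclidean_iff)
  moreover have "closure U \<subseteq> L" using \<open>closed L\<close> \<open>U \<subseteq> L\<close> by (simp add: closure_minimal)
  moreover have "compact (L \<inter> closure U)" using \<open>compact L\<close> by (rule compact_Int_closed) simp
  ultimately show ?thesis using that by (metis inf.absorb_iff2)
qed

lemma compact_nbhd_seq:
  fixes K :: "'a::{t2_space,second_countable_topology} set"
  assumes lc: "locally_compact_space (euclidean :: 'a topology)" and K: "compact K"
  obtains U :: "nat \<Rightarrow> 'a set" where "\<And>n. open (U n)" "\<And>n. K \<subseteq> U n"
    "\<And>n. compact (closure (U n))" "decseq U" "(\<Inter>n. closure (U n)) = K"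
proof -
  define \<U> where "\<U> = {U. open U \<and> K \<subseteq> U \<and> compact (closure U)}"
  obtain U0 where "open U0" "K \<subseteq> U0" "compact (closure U0)" by (rule nbhd_compact_closure[OF lc K])
  then have U0: "U0 \<in> \<U>" unfolding \<U>_def by simp
  have sep: "\<exists>U\<in>\<U>. y \<notin> closure U" if "y \<notin> K" for y
  proof -
    have c1: "compactin euclidean K" using K by (simp add: compactin_euclidean_iff)
    have c2: "compactin euclidean {y}" by (simp add: compactin_euclidean_iff)
    have dj: "disjnt K {y}" using that by (simp add: disjnt_def)
    obtain S T where ST0: "openin euclidean S" "openin euclidean T" "K \<subseteq> S" "{y} \<subseteq> T" "disjnt S T"
      using Hausdorff_space_compact_separation[OF haus_eucl c1 c2 dj] by blast
    have ST: "open S" "open T" "K \<subseteq> S" "{y} \<subseteq> T" "disjnt S T"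
      using ST0 by (simp_all only: open_openin)
    have d1: "closure (U0 \<inter> S) \<subseteq> closure U0" by (simp add: closure_mono)
    have "U0 \<inter> S \<subseteq> - T" using ST(5) by (auto simp: disjnt_def)
    then have d2: "closure (U0 \<inter> S) \<subseteq> - T"
      by (rule closure_minimal) (simp add: closed_Compl ST(2))
    have cU0: "compact (closure U0)" using U0 unfolding \<U>_def by simp
    have "compact (closure U0 \<inter> closure (U0 \<inter> S))"
      by (rule compact_Int_closed[OF cU0 closed_closure])
    moreover have "closure U0 \<inter> closure (U0 \<inter> S) = closure (U0 \<inter> S)" using d1 by blast
    ultimately have "compact (closure (U0 \<inter> S))" by simp
    moreover have "open (U0 \<inter> S)" using U0 ST(1) unfolding \<U>_def by (simp add: open_Int)
    moreover have "K \<subseteq> U0 \<inter> S" using U0 ST(3) unfolding \<U>_def by simp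
    ultimately have "U0 \<inter> S \<in> \<U>" unfolding \<U>_def by simp
    moreover have "y \<notin> closure (U0 \<inter> S)" using d2 ST(4) by blast
    ultimately show ?thesis by blast
  qed
  define f where "f = (\<lambda>U::'a set. - closure U)"
  obtain F' where F': "F' \<subseteq> f ` \<U>" "countable F'" "\<Union>F' = \<Union>(f ` \<U>)"
    using Lindelof[of "f ` \<U>"] unfolding f_def by blast
  obtain \<V> where V: "countable \<V>" "\<V> \<subseteq> \<U>" "F' = f ` \<V>"
    using countable_subset_image[of F' f \<U>] F' by blast
  define \<W> where "\<W> = insert U0 \<V>"
  have W: "countable \<W>" "\<W> \<noteq> {}" "\<W> \<subseteq> \<U>" using V U0 unfolding \<W>_def by auto
  define W where "W = from_nat_into \<W>"
  have rW: "range W = \<W>" using W unfolding W_def by simp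
  have Win: "W n \<in> \<U>" for n using rW W by blast
  define U where "U n = (\<Inter>i\<le>n. W i)" for n
  have o: "open (U n)" for n using Win unfolding U_def \<U>_def by (auto intro!: open_INT)
  have k: "K \<subseteq> U n" for n using Win unfolding U_def \<U>_def by auto
  have cl: "closure (U n) \<subseteq> closure (W m)" if "m \<le> n" for m n
    using that unfolding U_def by (intro closure_mono) auto
  have c: "compact (closure (U n))" for n
  proof -
    have cW: "compact (closure (W 0))" using Win[of 0] unfolding \<U>_def by simp
    have "compact (closure (W 0) \<inter> closure (U n))" by (rule compact_Int_closed[OF cW closed_closure])
    moreover have "closure (W 0) \<inter> closure (U n) = closure (U n)" using cl[of 0 n] by blast
    ultimately show ?thesis by simp
  qed
  have d: "decseq U" unfolding decseq_def U_def by auto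
  have "(\<Inter>n. closure (U n)) \<subseteq> K"
  proof
    fix y assume y: "y \<in> (\<Inter>n. closure (U n))"
    show "y \<in> K"
    proof (rule ccontr)
      assume "y \<notin> K"
      then have "y \<in> \<Union>(f ` \<U>)" using sep unfolding f_def by auto
      then have "y \<in> \<Union>F'" using F'(3) by simp
      then have "y \<in> \<Union>(f ` \<V>)" using V(3) by simp
      then obtain V where "V \<in> \<V>" "y \<notin> closure V" unfolding f_def by auto
      have "V \<in> range W" using rW \<open>V \<in> \<V>\<close> unfolding \<W>_def by simp
      then obtain m where m: "V = W m" by (rule rangeE)
      have "y \<in> closure (U m)" using y by (rule INT_D) simp
      moreover have "closure (U m) \<subseteq> closure (W m)" using cl[of m m] by simp
      ultimately have "y \<in> closure (W m)" by (rule rev_subsetD)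
      then show False using m \<open>y \<notin> closure V\<close> by simp
    qed
  qed
  moreover have "K \<subseteq> (\<Inter>n. closure (U n))"
  proof
    fix x assume "x \<in> K"
    then have "x \<in> closure (U n)" for n using k[of n] closure_subset[of "U n"] by (auto)
    then show "x \<in> (\<Inter>n. closure (U n))" by simp
  qed
  ultimately have "(\<Inter>n. closure (U n)) = K" by (rule antisym)
  then show ?thesis by (rule that[OF o k c d])
qed



definition rfr :: "'w measure \<Rightarrow> ('w \<Rightarrow> real) \<Rightarrow> real \<Rightarrow> bool" where
  "rfr M Y a \<longleftrightarrow> Y \<in> borel_measurable M \<and> (\<forall>\<omega>\<in>space M. 0 \<le> Y \<omega>) \<and> 0 \<le> a
     \<and> (\<forall>t>0. measure M {\<omega>\<in>space M. Y \<omega> \<le> t} = exp (- a / t))"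

lemma (in prob_space) sub2:
  assumes "A \<in> sets M" "B \<in> sets M" shows "prob (A \<union> B) \<le> prob A + prob B"
  using measure_subadditive[OF assms] emeasure_finite by simp

lemma aux3: "(A::real) \<le> B + q \<Longrightarrow> C \<le> A + q \<Longrightarrow> q < e/2 \<Longrightarrow> \<bar>B - E\<bar> < e/2 \<Longrightarrow> \<bar>C - E\<bar> < e/2 \<Longrightarrow> \<bar>A - E\<bar> < e"
  by linarith

lemma (in prob_space) scale_limit:
  assumes Y: "\<And>n. rfr M (Y n) (a n)" and Z: "rfr M Z b"
    and cp: "\<forall>\<epsilon>>0. (\<lambda>n. prob {\<omega>\<in>space M. \<bar>Y n \<omega> - Z \<omega>\<bar> > \<epsilon>}) \<longlonglongrightarrow> 0"
  shows "a \<longlonglongrightarrow> b"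
proof -
  have [measurable]: "Y n \<in> borel_measurable M" for n using Y unfolding rfr_def by blast
  have [measurable]: "Z \<in> borel_measurable M" using Z unfolding rfr_def by blast
  define q where "q n d = prob {\<omega>\<in>space M. \<bar>Y n \<omega> - Z \<omega>\<bar> > d}" for n d
  have pY: "prob {\<omega>\<in>space M. Y n \<omega> \<le> 1} = exp (- a n)" for n
    using Y[of n] unfolding rfr_def by auto
  have pZ: "prob {\<omega>\<in>space M. Z \<omega> \<le> s} = exp (- b / s)" if "s > 0" for s
    using Z that unfolding rfr_def by auto
  have up: "exp (- a n) \<le> exp (- b / (1 + d)) + q n d" if d: "0 < d" "d < 1" for n d
  proof -
    have "{\<omega>\<in>space M. Y n \<omega> \<le> 1} \<subseteq> {\<omega>\<in>space M. Z \<omega> \<le> 1 + d} \<union> {\<omega>\<in>space M. \<bar>Y n \<omega> - Z \<omega>\<bar> > d}"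
      by auto
    then have "prob {\<omega>\<in>space M. Y n \<omega> \<le> 1} \<le> prob ({\<omega>\<in>space M. Z \<omega> \<le> 1 + d} \<union> {\<omega>\<in>space M. \<bar>Y n \<omega> - Z \<omega>\<bar> > d})"
      by (intro finite_measure_mono) measurable
    also have "\<dots> \<le> prob {\<omega>\<in>space M. Z \<omega> \<le> 1 + d} + q n d"
      unfolding q_def by (intro sub2) measurable
    finally show ?thesis using pY pZ[of "1+d"] d by simp
  qed
  have lo: "exp (- b / (1 - d)) \<le> exp (- a n) + q n d" if d: "0 < d" "d < 1" for n d
  proof -
    have "{\<omega>\<in>space M. Z \<omega> \<le> 1 - d} \<subseteq> {\<omega>\<in>space M. Y n \<omega> \<le> 1} \<union> {\<omega>\<in>space M. \<bar>Y n \<omega> - Z \<omega>\<bar> > d}"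
      by auto
    then have "prob {\<omega>\<in>space M. Z \<omega> \<le> 1 - d} \<le> prob ({\<omega>\<in>space M. Y n \<omega> \<le> 1} \<union> {\<omega>\<in>space M. \<bar>Y n \<omega> - Z \<omega>\<bar> > d})"
      by (intro finite_measure_mono) measurable
    also have "\<dots> \<le> prob {\<omega>\<in>space M. Y n \<omega> \<le> 1} + q n d"
      unfolding q_def by (intro sub2) measurable
    finally show ?thesis using pY pZ[of "1-d"] d by simp
  qed
  have "(\<lambda>n. exp (- a n)) \<longlonglongrightarrow> exp (- b)"
  proof (rule LIMSEQ_I)
    fix e :: real assume e: "0 < e"
    have "(\<lambda>s. exp (- b / s)) \<midarrow>1\<rightarrow> exp (- b / 1)"
      by (intro tendsto_intros) auto
    from LIM_D[OF this, of "e/2"] e obtain s where s: "s > 0"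
      "\<And>x. x \<noteq> 1 \<and> norm (x - 1) < s \<Longrightarrow> norm (exp (- b / x) - exp (- b / 1)) < e/2" by auto
    define d where "d = min (s/2) (1/2)"
    have d: "0 < d" "d < 1" "d < s" using s unfolding d_def by auto
    have g1: "\<bar>exp (- b / (1 + d)) - exp (- b)\<bar> < e/2" using s(2)[of "1+d"] d by auto
    have g2: "\<bar>exp (- b / (1 - d)) - exp (- b)\<bar> < e/2" using s(2)[of "1-d"] d by auto
    have "(\<lambda>n. q n d) \<longlonglongrightarrow> 0" using cp d unfolding q_def by auto
    from order_tendstoD(2)[OF this, of "e/2"] e obtain N where N: "\<And>n. n \<ge> N \<Longrightarrow> q n d < e/2"
      by (auto simp: eventually_sequentially)
    have "norm (exp (- a n) - exp (- b)) < e" if "n \<ge> N" for n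
      using aux3[OF up[OF d(1,2), of n] lo[OF d(1,2), of n] N[OF that] g1 g2] by simp
    then show "\<exists>N. \<forall>n\<ge>N. norm (exp (- a n) - exp (- b)) < e" by blast
  qed
  then have "(\<lambda>n. ln (exp (- a n))) \<longlonglongrightarrow> ln (exp (- b))"
    by (rule tendsto_ln) simp
  then have "(\<lambda>n. - a n) \<longlonglongrightarrow> - b" by simp
  then show ?thesis by (rule tendsto_minus_cancel)
qed

lemma (in prob_space) gap_lemma:
  assumes V: "\<And>n. rfr M (V n) (d n)" and W: "\<And>n. rfr M (W n) (c n)"
    and le: "\<And>n \<omega>. \<omega> \<in> space M \<Longrightarrow> V n \<omega> \<le> W n \<omega>"
    and dL: "d \<longlonglongrightarrow> L" and cL: "c \<longlonglongrightarrow> L" and e: "\<epsilon> > 0"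
  shows "(\<lambda>n. prob {\<omega>\<in>space M. W n \<omega> - V n \<omega> > \<epsilon>}) \<longlonglongrightarrow> 0"
proof (rule order_tendstoI)
  have [measurable]: "V n \<in> borel_measurable M" for n using V unfolding rfr_def by blast
  have [measurable]: "W n \<in> borel_measurable M" for n using W unfolding rfr_def by blast
  fix a :: real assume "a < 0"
  then show "\<forall>\<^sub>F n in sequentially. a < prob {\<omega>\<in>space M. W n \<omega> - V n \<omega> > \<epsilon>}"
    by (intro always_eventually allI) (meson less_le_trans measure_nonneg)
next
  have [measurable]: "V n \<in> borel_measurable M" for n using V unfolding rfr_def by blast
  have [measurable]: "W n \<in> borel_measurable M" for n using W unfolding rfr_def by blast
  fix \<eta> :: real assume eta: "0 < \<eta>"
  have L0: "0 \<le> L" using dL V unfolding rfr_def by (intro LIMSEQ_le_const[OF dL]) auto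
  define T where "T = (L + 1) / \<eta>"
  have T: "T > 0" using L0 eta unfolding T_def by auto
  have LT: "L / T < \<eta>" using L0 eta unfolding T_def by (simp add: field_simps)
  define N :: nat where "N = nat \<lceil>T / \<epsilon>\<rceil> + 1"
  have N: "N \<ge> 1" "T / N < \<epsilon>"
  proof -
    show "N \<ge> 1" unfolding N_def by simp
    have "T / \<epsilon> < N" unfolding N_def by linarith
    then have "T < N * \<epsilon>" using e by (simp add: field_simps)
    then show "T / N < \<epsilon>" using \<open>N \<ge> 1\<close> by (simp add: field_simps)
  qed
  define t where "t i = real i * T / N" for i :: nat
  have tpos: "t i > 0" if "i \<ge> 1" for i using that T N unfolding t_def by auto
  define R where "R n = d n / T + (\<Sum>i\<in>{1..N}. exp (- d n / t i) - exp (- c n / t i))" for n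
  have "R \<longlonglongrightarrow> L / T + (\<Sum>i\<in>{1..N}. exp (- L / t i) - exp (- L / t i))"
    unfolding R_def by (intro tendsto_intros dL cL) (use T tpos in \<open>force+\<close>)
  then have "R \<longlonglongrightarrow> L / T" by simp
  from order_tendstoD(2)[OF this LT] have evR: "\<forall>\<^sub>F n in sequentially. R n < \<eta>" .
  have bound: "prob {\<omega>\<in>space M. W n \<omega> - V n \<omega> > \<epsilon>} \<le> R n" for n
  proof -
    define A where "A i = {\<omega>\<in>space M. V n \<omega> \<le> t i} - {\<omega>\<in>space M. W n \<omega> \<le> t i}" for i
    define B where "B = {\<omega>\<in>space M. T < V n \<omega>}"
    have [measurable]: "A i \<in> sets M" for i unfolding A_def by measurable
    have [measurable]: "B \<in> sets M" unfolding B_def by measurable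
    have cover: "{\<omega>\<in>space M. W n \<omega> - V n \<omega> > \<epsilon>} \<subseteq> B \<union> (\<Union>i\<in>{1..N}. A i)"
    proof
      fix \<omega> assume om: "\<omega> \<in> {\<omega>\<in>space M. W n \<omega> - V n \<omega> > \<epsilon>}"
      show "\<omega> \<in> B \<union> (\<Union>i\<in>{1..N}. A i)"
      proof (cases "T < V n \<omega>")
        case True then show ?thesis using om unfolding B_def by auto
      next
        case False
        have v0: "0 \<le> V n \<omega>" using V[of n] om unfolding rfr_def by auto
        define i where "i = max 1 (nat \<lceil>V n \<omega> * N / T\<rceil>)"
        have Np: "real N > 0" using N by simp
        have "V n \<omega> * N / T \<le> N" using False T Np v0 by (simp add: field_simps)
        then have i1: "i \<le> N" "1 \<le> i" unfolding i_def using N by (auto simp: nat_le_iff ceiling_le_iff)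
        have i2: "V n \<omega> \<le> t i"
        proof -
          have "V n \<omega> * N / T \<le> real i" unfolding i_def by linarith
          then show ?thesis unfolding t_def using T Np by (simp add: field_simps)
        qed
        have i3: "t i < V n \<omega> + \<epsilon>"
        proof (cases "i = 1")
          case True
          then show ?thesis using N v0 unfolding t_def by simp
        next
          case False
          then have "real i < V n \<omega> * N / T + 1" unfolding i_def by linarith
          then have "real i * T / N < V n \<omega> + T / N" using T Np by (simp add: field_simps)
          then show ?thesis using N unfolding t_def by linarith
        qed
        have "\<omega> \<in> A i" using om i2 i3 unfolding A_def by auto
        then show ?thesis using i1 by auto
      qed
    qed
    have "prob {\<omega>\<in>space M. W n \<omega> - V n \<omega> > \<epsilon>} \<le> prob (B \<union> (\<Union>i\<in>{1..N}. A i))"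
      using cover by (intro finite_measure_mono) measurable
    also have "\<dots> \<le> prob B + prob (\<Union>i\<in>{1..N}. A i)" by (intro sub2) measurable
    also have "prob (\<Union>i\<in>{1..N}. A i) \<le> (\<Sum>i\<in>{1..N}. prob (A i))"
      by (intro finite_measure_subadditive_finite) auto
    also have "(\<Sum>i\<in>{1..N}. prob (A i)) = (\<Sum>i\<in>{1..N}. exp (- d n / t i) - exp (- c n / t i))"
    proof (rule sum.cong)
      fix i assume "i \<in> {1..N}"
      then have ti: "t i > 0" using tpos by auto
      have sub: "{\<omega>\<in>space M. W n \<omega> \<le> t i} \<subseteq> {\<omega>\<in>space M. V n \<omega> \<le> t i}"
        by (auto intro: order_trans[OF le])
      have "prob (A i) = prob {\<omega>\<in>space M. V n \<omega> \<le> t i} - prob {\<omega>\<in>space M. W n \<omega> \<le> t i}"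
        unfolding A_def by (rule finite_measure_Diff[OF _ _ sub]) measurable
      then show "prob (A i) = exp (- d n / t i) - exp (- c n / t i)"
        using V[of n] W[of n] ti unfolding rfr_def by simp
    qed simp
    also have "prob B \<le> d n / T"
    proof -
      have "B = space M - {\<omega>\<in>space M. V n \<omega> \<le> T}" unfolding B_def by auto
      then have "prob B = 1 - exp (- d n / T)"
        using prob_compl[of "{\<omega>\<in>space M. V n \<omega> \<le> T}"] V[of n] T unfolding rfr_def by auto
      also have "\<dots> \<le> d n / T" using exp_ge_add_one_self[of "- d n / T"] by linarith
      finally show ?thesis .
    qed
    finally show ?thesis unfolding R_def by linarith
  qed
  show "\<forall>\<^sub>F n in sequentially. prob {\<omega>\<in>space M. W n \<omega> - V n \<omega> > \<epsilon>} < \<eta>"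
    using evR by eventually_elim (use bound in \<open>auto intro: le_less_trans\<close>)
qed


lemma sm_mono:
  assumes "sup_measure \<phi>" "A \<subseteq> B" shows "\<phi> A \<le> \<phi> B"
proof -
  have h: "\<forall>A B. A \<subseteq> B \<longrightarrow> \<phi> A \<le> \<phi> B"
    using assms(1)[unfolded sup_measure_def, THEN conjunct2, THEN conjunct1] .
  show ?thesis using h assms(2) by blast
qed

lemma sm_empty:
  assumes "sup_measure \<phi>" shows "\<phi> {} = 0"
  using assms[unfolded sup_measure_def, THEN conjunct1] .

lemma sm_fin:
  assumes "sup_measure \<phi>" "compact K" shows "\<phi> K < \<top>"
proof -
  have h: "\<forall>K. compact K \<longrightarrow> \<phi> K < \<top>"
    using assms(1)[unfolded sup_measure_def, THEN conjunct2, THEN conjunct2, THEN conjunct2,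
      THEN conjunct2, THEN conjunct1] .
  show ?thesis using h assms(2) by blast
qed

lemma sm_dec:
  assumes "sup_measure \<phi>" "decseq K" "\<And>n. compact (K n)"
  shows "(\<lambda>n. \<phi> (K n)) \<longlonglongrightarrow> \<phi> (\<Inter>n. K n)"
proof -
  have h: "\<forall>K :: nat \<Rightarrow> _ set. decseq K \<and> (\<forall>n. compact (K n))
        \<longrightarrow> (\<lambda>n. \<phi> (K n)) \<longlonglongrightarrow> \<phi> (\<Inter>n. K n)"
    using assms(1)[unfolded sup_measure_def, THEN conjunct2, THEN conjunct2, THEN conjunct2,
      THEN conjunct1] .
  have "decseq K \<and> (\<forall>n. compact (K n))" using assms(2,3) by simp
  then show ?thesis by (rule h[rule_format])
qed

lemma sm_open_un:
  assumes "sup_measure \<phi>" "open U" "open V"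
  shows "\<phi> (U \<union> V) = max (\<phi> U) (\<phi> V)"
proof -
  have h: "\<forall>\<G>. (\<forall>G\<in>\<G>. open G) \<longrightarrow> \<phi> (\<Union>\<G>) = (SUP G\<in>\<G>. \<phi> G)"
    using assms(1)[unfolded sup_measure_def, THEN conjunct2, THEN conjunct2, THEN conjunct2,
      THEN conjunct2, THEN conjunct2] .
  have "\<forall>G\<in>{U, V}. open G" using assms(2,3) by simp
  then have "\<phi> (\<Union>{U, V}) = (SUP G\<in>{U, V}. \<phi> G)" by (rule mp[OF spec[OF h]])
  then show ?thesis by (simp add: sup_max)
qed

lemma sm_compact_un:
  fixes A B :: "'a::{t2_space,second_countable_topology} set"
  assumes lc: "locally_compact_space (euclidean :: 'a topology)" and sm: "sup_measure \<phi>"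
    and A: "compact A" and B: "compact B"
  shows "\<phi> (A \<union> B) = max (\<phi> A) (\<phi> B)"
proof -
  obtain U where U: "\<And>n. open (U n)" "\<And>n. A \<subseteq> U n"
    "\<And>n. compact (closure (U n))" "decseq U" "(\<Inter>n. closure (U n)) = A"
    using compact_nbhd_seq[OF lc A] by blast
  obtain V where V: "\<And>n. open (V n)" "\<And>n. B \<subseteq> V n"
    "\<And>n. compact (closure (V n))" "decseq V" "(\<Inter>n. closure (V n)) = B"
    using compact_nbhd_seq[OF lc B] by blast
  have dU: "decseq (\<lambda>n. closure (U n))" using U(4) unfolding decseq_def by (simp add: closure_mono)
  have dV: "decseq (\<lambda>n. closure (V n))" using V(4) unfolding decseq_def by (simp add: closure_mono)
  have tA: "(\<lambda>n. \<phi> (closure (U n))) \<longlonglongrightarrow> \<phi> A"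
    using sm_dec[OF sm dU U(3)] U(5) by simp
  have tB: "(\<lambda>n. \<phi> (closure (V n))) \<longlonglongrightarrow> \<phi> B"
    using sm_dec[OF sm dV V(3)] V(5) by simp
  have le: "\<phi> (A \<union> B) \<le> max (\<phi> (closure (U n))) (\<phi> (closure (V n)))" for n
  proof -
    have "\<phi> (A \<union> B) \<le> \<phi> (U n \<union> V n)" using U(2) V(2) by (intro sm_mono[OF sm]) auto
    also have "\<dots> = max (\<phi> (U n)) (\<phi> (V n))" using sm_open_un[OF sm U(1) V(1)] .
    also have "\<dots> \<le> max (\<phi> (closure (U n))) (\<phi> (closure (V n)))"
      by (intro max.mono sm_mono[OF sm] closure_subset)
    finally show ?thesis .
  qed
  have "\<phi> (A \<union> B) \<le> max (\<phi> A) (\<phi> B)"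
    by (rule LIMSEQ_le_const[OF tendsto_max[OF tA tB]]) (use le in auto)
  moreover have "max (\<phi> A) (\<phi> B) \<le> \<phi> (A \<union> B)" by (auto intro: sm_mono[OF sm])
  ultimately show ?thesis by (rule antisym)
qed

lemma ext_ind:
  fixes \<phi> :: "'a::topological_space set \<Rightarrow> ennreal" and K :: "'a set"
  assumes sm: "sup_measure \<phi>" and K: "compact K"
  shows "ext_integral \<phi> (indicator K) = \<phi> K"
  unfolding ext_integral_def
proof (rule antisym)
  show "(SUP K'\<in>{K. compact K}. \<phi> K' * (INF x\<in>K'. ennreal (indicator K x))) \<le> \<phi> K"
  proof (rule SUP_least)
    fix K' :: "'a set" assume "K' \<in> {K. compact K}"
    show "\<phi> K' * (INF x\<in>K'. ennreal (indicator K x)) \<le> \<phi> K"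
    proof (cases "K' \<subseteq> K")
      case True
      show ?thesis
      proof (cases "K' = {}")
        case True then show ?thesis using sm_empty[OF sm] by simp
      next
        case False
        have "(INF x\<in>K'. ennreal (indicator K x)) = 1"
          using \<open>K' \<subseteq> K\<close> False by (simp add: subset_iff indicator_def cong: INF_cong)
        then show ?thesis using sm_mono[OF sm True] by simp
      qed
    next
      case False
      then obtain x where "x \<in> K'" "x \<notin> K" by blast
      then have "(INF x\<in>K'. ennreal (indicator K x)) \<le> 0"
        by (intro INF_lower2[of x]) auto
      then show ?thesis by simp
    qed
  qed
next
  show "\<phi> K \<le> (SUP K'\<in>{K. compact K}. \<phi> K' * (INF x\<in>K'. ennreal (indicator K x)))"
  proof (cases "K = {}")
    case True then show ?thesis using sm_empty[OF sm] by simp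
  next
    case False
    have "(INF x\<in>K. ennreal (indicator K x)) = 1"
      using False by (simp add: indicator_def cong: INF_cong)
    then show ?thesis using K by (intro SUP_upper2[of K]) auto
  qed
qed

lemma ms_sup: "max_stable M X \<Longrightarrow> \<omega> \<in> space M \<Longrightarrow> sup_measure (X \<omega>)"
proof -
  assume "max_stable M X" "\<omega> \<in> space M"
  then have "X \<omega> \<in> space supmeasure_space"
    unfolding max_stable_def random_supmeasure_def by (meson measurable_space)
  then show ?thesis unfolding supmeasure_space_def by (simp add: space_measure_of_conv)
qed

lemma frechet_cong:
  assumes "\<And>\<omega>. \<omega> \<in> space M \<Longrightarrow> F \<omega> = G \<omega>"
  shows "frechet M F a = frechet M G a"
proof -
  have "F \<in> borel_measurable M \<longleftrightarrow> G \<in> borel_measurable M" using assms by (rule measurable_cong)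
  moreover have "{\<omega> \<in> space M. F \<omega> \<le> ennreal t} = {\<omega> \<in> space M. G \<omega> \<le> ennreal t}" for t
    using assms by auto
  ultimately show ?thesis unfolding frechet_def by simp
qed

lemma frechet_unique: "frechet M Y a \<Longrightarrow> frechet M Y b \<Longrightarrow> a = b"
proof -
  assume "frechet M Y a" "frechet M Y b"
  then have "exp (- a / 1) = exp (- b / 1)" unfolding frechet_def
    by (metis zero_less_one)
  then show "a = b" by simp
qed

lemma ms_frechet:
  fixes X :: "'w \<Rightarrow> 'a::topological_space set \<Rightarrow> ennreal"
  assumes "max_stable M X" "compact C"
  shows "frechet M (\<lambda>\<omega>. X \<omega> C) (ecf M X C)"
proof -
  have H: "\<forall>(n::nat) (K :: nat \<Rightarrow> 'a set) (u :: nat \<Rightarrow> real).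
        (\<forall>i<n. compact (K i) \<and> 0 \<le> u i) \<longrightarrow>
        (\<exists>a. frechet M (\<lambda>\<omega>. SUP i\<in>{..<n}. ennreal (u i) * X \<omega> (K i)) a)"
    using assms(1) unfolding max_stable_def by blast
  obtain a where a: "frechet M (\<lambda>\<omega>. SUP i\<in>{..<(1::nat)}. ennreal ((\<lambda>_. 1) i) * X \<omega> ((\<lambda>_. C) i)) a"
    using H[rule_format, of 1 "\<lambda>_. C" "\<lambda>_. 1"] assms(2) by auto
  have e: "{..<(1::nat)} = {0}" "{..<Suc 0} = {0}" by auto
  have a': "frechet M (\<lambda>\<omega>. X \<omega> C) a" using a by (simp add: e)
  have fa: "frechet M (\<lambda>\<omega>. ext_integral (X \<omega>) (indicator C)) a"
  proof -
    have "frechet M (\<lambda>\<omega>. ext_integral (X \<omega>) (indicator C)) a = frechet M (\<lambda>\<omega>. X \<omega> C) a"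
      by (rule frechet_cong, rule ext_ind[OF ms_sup[OF assms(1)] assms(2)])
    then show ?thesis using a' by simp
  qed
  have "ecf M X C = a" unfolding ecf_def tdf_def
    by (rule the_equality[where P="\<lambda>a. frechet M (\<lambda>\<omega>. ext_integral (X \<omega>) (indicator C)) a", OF fa])
      (rule frechet_unique[OF _ fa])
  then show ?thesis using a' by simp
qed

lemma ms_rfr:
  assumes "max_stable M X" "compact C"
  shows "rfr M (\<lambda>\<omega>. enn2real (X \<omega> C)) (ecf M X C)"
proof -
  have f: "frechet M (\<lambda>\<omega>. X \<omega> C) (ecf M X C)" by (rule ms_frechet[OF assms])
  have [measurable]: "(\<lambda>\<omega>. X \<omega> C) \<in> borel_measurable M" using f unfolding frechet_def by blast
  have fin: "X \<omega> C < \<top>" if "\<omega> \<in> space M" for \<omega> using sm_fin[OF ms_sup[OF assms(1) that] assms(2)] .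
  have "{\<omega> \<in> space M. enn2real (X \<omega> C) \<le> t} = {\<omega> \<in> space M. X \<omega> C \<le> ennreal t}" if "t > 0" for t
  proof -
    have "enn2real (X \<omega> C) \<le> t \<longleftrightarrow> X \<omega> C \<le> ennreal t" if "\<omega> \<in> space M" for \<omega>
    proof -
      have e: "X \<omega> C = ennreal (enn2real (X \<omega> C))" using fin[OF that] by simp
      have "enn2real (X \<omega> C) \<le> t \<longleftrightarrow> ennreal (enn2real (X \<omega> C)) \<le> ennreal t"
        using \<open>t > 0\<close> by simp
      then show ?thesis using e by simp
    qed
    then show ?thesis by auto
  qed
  then show ?thesis using f unfolding rfr_def frechet_def by auto
qed

lemma am1: "(e::real) < \<bar>max y z - z\<bar> \<Longrightarrow> e < \<bar>y - z\<bar>"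
  by (cases "y \<le> z") (auto simp: max_def)

lemma am2: "(e::real) < \<bar>y - z\<bar> \<Longrightarrow> e < max y z - z \<or> e < max y z - y"
  by (cases "y \<le> z") (auto simp: max_def)

lemma enn2real_max: "x < \<top> \<Longrightarrow> y < \<top> \<Longrightarrow> enn2real (max x y) = max (enn2real x) (enn2real y)"
proof (cases "x \<le> y")
  case True
  assume "y < \<top>"
  then have "enn2real x \<le> enn2real y" using True by (rule enn2real_mono[rotated])
  then show ?thesis using True by (simp add: max_def)
next
  case False
  assume "x < \<top>"
  then have "enn2real y \<le> enn2real x" using False by (intro enn2real_mono) auto
  then show ?thesis using False by (simp add: max_def)
qed



theorem mainTheorem17:
  fixes M :: "'w measure"
    and X :: "'w \<Rightarrow> 'a::{t2_space, second_countable_topology} set \<Rightarrow> ennreal"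
    and K :: "'a set" and Ks :: "nat \<Rightarrow> 'a set"
  assumes "locally_compact_space (euclidean :: 'a topology)"
    and "prob_space M"
    and "CRSM M X"
    and "compact K" and "\<forall>n. compact (Ks n)"
  shows "conv_in_prob M (\<lambda>n \<omega>. enn2real (X \<omega> (Ks n))) (\<lambda>\<omega>. enn2real (X \<omega> K))
     \<longleftrightarrow> ((\<lambda>n. ecf M X (Ks n)) \<longlonglongrightarrow> ecf M X K
          \<and> (\<lambda>n. ecf M X (Ks n \<union> K)) \<longlonglongrightarrow> ecf M X K)"
  proof -
  interpret prob_space M by fact
  have ms: "max_stable M X" using assms(3) unfolding CRSM_def by blast
  have cK: "compact (Ks n \<union> K)" for n using assms(4,5) by auto
  define Y where "Y n \<omega> = enn2real (X \<omega> (Ks n))" for n \<omega>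
  define Z where "Z \<omega> = enn2real (X \<omega> K)" for \<omega>
  define W where "W n \<omega> = enn2real (X \<omega> (Ks n \<union> K))" for n \<omega>
  have rY: "rfr M (Y n) (ecf M X (Ks n))" for n unfolding Y_def using ms_rfr[OF ms] assms(5) by blast
  have rZ: "rfr M Z (ecf M X K)" unfolding Z_def using ms_rfr[OF ms assms(4)] .
  have rW: "rfr M (W n) (ecf M X (Ks n \<union> K))" for n unfolding W_def using ms_rfr[OF ms cK] by blast
  have [measurable]: "Y n \<in> borel_measurable M" for n using rY unfolding rfr_def by blast
  have [measurable]: "Z \<in> borel_measurable M" using rZ unfolding rfr_def by blast
  have [measurable]: "W n \<in> borel_measurable M" for n using rW unfolding rfr_def by blast
  have Wmax: "W n \<omega> = max (Y n \<omega>) (Z \<omega>)" if "\<omega> \<in> space M" for n \<omega>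
  proof -
    have sm: "sup_measure (X \<omega>)" using ms_sup[OF ms that] .
    have "X \<omega> (Ks n \<union> K) = max (X \<omega> (Ks n)) (X \<omega> K)"
      using sm_compact_un[OF assms(1) sm] assms(4,5) by blast
    then show ?thesis unfolding W_def Y_def Z_def
      using enn2real_max sm_fin[OF sm] assms(4,5) by metis
  qed
  show ?thesis unfolding conv_in_prob_def
  proof
    assume cp: "\<forall>\<epsilon>>0. (\<lambda>n. prob {\<omega> \<in> space M. \<epsilon> < \<bar>enn2real (X \<omega> (Ks n)) - enn2real (X \<omega> K)\<bar>}) \<longlonglongrightarrow> 0"
    then have cpY: "\<forall>\<epsilon>>0. (\<lambda>n. prob {\<omega> \<in> space M. \<epsilon> < \<bar>Y n \<omega> - Z \<omega>\<bar>}) \<longlonglongrightarrow> 0"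
      unfolding Y_def Z_def .
    have cpW: "\<forall>\<epsilon>>0. (\<lambda>n. prob {\<omega> \<in> space M. \<epsilon> < \<bar>W n \<omega> - Z \<omega>\<bar>}) \<longlonglongrightarrow> 0"
    proof (intro allI impI)
      fix \<epsilon> :: real assume e: "\<epsilon> > 0"
      have Yl: "(\<lambda>n. prob {\<omega> \<in> space M. \<epsilon> < \<bar>Y n \<omega> - Z \<omega>\<bar>}) \<longlonglongrightarrow> 0" using cpY e by blast
      have le: "prob {\<omega> \<in> space M. \<epsilon> < \<bar>W n \<omega> - Z \<omega>\<bar>} \<le> prob {\<omega> \<in> space M. \<epsilon> < \<bar>Y n \<omega> - Z \<omega>\<bar>}" for n
      proof (rule finite_measure_mono)
        show "{\<omega> \<in> space M. \<epsilon> < \<bar>W n \<omega> - Z \<omega>\<bar>} \<subseteq> {\<omega> \<in> space M. \<epsilon> < \<bar>Y n \<omega> - Z \<omega>\<bar>}"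
        proof (rule subsetI)
          fix \<omega> assume "\<omega> \<in> {\<omega> \<in> space M. \<epsilon> < \<bar>W n \<omega> - Z \<omega>\<bar>}"
          then have "\<omega> \<in> space M" "\<epsilon> < \<bar>max (Y n \<omega>) (Z \<omega>) - Z \<omega>\<bar>" using Wmax by auto
          then show "\<omega> \<in> {\<omega> \<in> space M. \<epsilon> < \<bar>Y n \<omega> - Z \<omega>\<bar>}" using am1 by blast
        qed
      qed measurable
      show "(\<lambda>n. prob {\<omega> \<in> space M. \<epsilon> < \<bar>W n \<omega> - Z \<omega>\<bar>}) \<longlonglongrightarrow> 0"
      proof (rule tendsto_sandwich[OF _ _ tendsto_const Yl])
        show "\<forall>\<^sub>F n in sequentially. 0 \<le> prob {\<omega> \<in> space M. \<epsilon> < \<bar>W n \<omega> - Z \<omega>\<bar>}"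
          by (simp add: measure_nonneg)
        show "\<forall>\<^sub>F n in sequentially. prob {\<omega> \<in> space M. \<epsilon> < \<bar>W n \<omega> - Z \<omega>\<bar>} \<le> prob {\<omega> \<in> space M. \<epsilon> < \<bar>Y n \<omega> - Z \<omega>\<bar>}"
          using le by simp
      qed
    qed
    show "(\<lambda>n. ecf M X (Ks n)) \<longlonglongrightarrow> ecf M X K \<and> (\<lambda>n. ecf M X (Ks n \<union> K)) \<longlonglongrightarrow> ecf M X K"
      using scale_limit[OF rY rZ cpY] scale_limit[OF rW rZ cpW] by blast
  next
    assume conv: "(\<lambda>n. ecf M X (Ks n)) \<longlonglongrightarrow> ecf M X K \<and> (\<lambda>n. ecf M X (Ks n \<union> K)) \<longlonglongrightarrow> ecf M X K"
    then have c1: "(\<lambda>n. ecf M X (Ks n \<union> K)) \<longlonglongrightarrow> ecf M X K" and c2: "(\<lambda>n. ecf M X (Ks n)) \<longlonglongrightarrow> ecf M X K"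
      by blast+
    have le1: "\<And>n \<omega>. \<omega> \<in> space M \<Longrightarrow> Z \<omega> \<le> W n \<omega>" using Wmax by simp
    have le2: "\<And>n \<omega>. \<omega> \<in> space M \<Longrightarrow> Y n \<omega> \<le> W n \<omega>" using Wmax by simp
    have rZ': "\<And>n. rfr M Z (ecf M X K)" by (rule rZ)
    show "\<forall>\<epsilon>>0. (\<lambda>n. prob {\<omega> \<in> space M. \<epsilon> < \<bar>enn2real (X \<omega> (Ks n)) - enn2real (X \<omega> K)\<bar>}) \<longlonglongrightarrow> 0"
    proof (intro allI impI)
      fix \<epsilon> :: real assume e: "\<epsilon> > 0"
      have g1: "(\<lambda>n. prob {\<omega>\<in>space M. W n \<omega> - Z \<omega> > \<epsilon>}) \<longlonglongrightarrow> 0"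
        using gap_lemma[where V="\<lambda>n. Z" and d="\<lambda>n. ecf M X K", OF rZ' rW le1 tendsto_const c1 e] .
      have g2: "(\<lambda>n. prob {\<omega>\<in>space M. W n \<omega> - Y n \<omega> > \<epsilon>}) \<longlonglongrightarrow> 0"
        using gap_lemma[OF rY rW le2 c2 c1 e] .
      have bd: "prob {\<omega> \<in> space M. \<epsilon> < \<bar>Y n \<omega> - Z \<omega>\<bar>}
          \<le> prob {\<omega>\<in>space M. W n \<omega> - Z \<omega> > \<epsilon>} + prob {\<omega>\<in>space M. W n \<omega> - Y n \<omega> > \<epsilon>}" for n
      proof -
        have "prob {\<omega> \<in> space M. \<epsilon> < \<bar>Y n \<omega> - Z \<omega>\<bar>}
           \<le> prob ({\<omega>\<in>space M. W n \<omega> - Z \<omega> > \<epsilon>} \<union> {\<omega>\<in>space M. W n \<omega> - Y n \<omega> > \<epsilon>})"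
        proof (rule finite_measure_mono)
          show "{\<omega> \<in> space M. \<epsilon> < \<bar>Y n \<omega> - Z \<omega>\<bar>} \<subseteq> {\<omega>\<in>space M. W n \<omega> - Z \<omega> > \<epsilon>} \<union> {\<omega>\<in>space M. W n \<omega> - Y n \<omega> > \<epsilon>}"
          proof (rule subsetI)
            fix \<omega> assume om: "\<omega> \<in> {\<omega> \<in> space M. \<epsilon> < \<bar>Y n \<omega> - Z \<omega>\<bar>}"
            then have sp: "\<omega> \<in> space M" and ee: "\<epsilon> < \<bar>Y n \<omega> - Z \<omega>\<bar>" by auto
            from ee have "\<epsilon> < max (Y n \<omega>) (Z \<omega>) - Z \<omega> \<or> \<epsilon> < max (Y n \<omega>) (Z \<omega>) - Y n \<omega>" by (rule am2)
            then show "\<omega> \<in> {\<omega>\<in>space M. W n \<omega> - Z \<omega> > \<epsilon>} \<union> {\<omega>\<in>space M. W n \<omega> - Y n \<omega> > \<epsilon>}"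
              using sp Wmax[OF sp, of n] by auto
          qed
        qed measurable
        also have "\<dots> \<le> prob {\<omega>\<in>space M. W n \<omega> - Z \<omega> > \<epsilon>} + prob {\<omega>\<in>space M. W n \<omega> - Y n \<omega> > \<epsilon>}"
          by (intro sub2) measurable
        finally show ?thesis .
      qed
      have "(\<lambda>n. prob {\<omega> \<in> space M. \<epsilon> < \<bar>Y n \<omega> - Z \<omega>\<bar>}) \<longlonglongrightarrow> 0"
      proof (rule tendsto_sandwich[OF _ _ tendsto_const])
        show "\<forall>\<^sub>F n in sequentially. 0 \<le> prob {\<omega> \<in> space M. \<epsilon> < \<bar>Y n \<omega> - Z \<omega>\<bar>}"
          by (simp add: measure_nonneg)
        show "\<forall>\<^sub>F n in sequentially. prob {\<omega> \<in> space M. \<epsilon> < \<bar>Y n \<omega> - Z \<omega>\<bar>} \<le>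
            prob {\<omega>\<in>space M. W n \<omega> - Z \<omega> > \<epsilon>} + prob {\<omega>\<in>space M. W n \<omega> - Y n \<omega> > \<epsilon>}"
          using bd by simp
        show "(\<lambda>n. prob {\<omega>\<in>space M. W n \<omega> - Z \<omega> > \<epsilon>} + prob {\<omega>\<in>space M. W n \<omega> - Y n \<omega> > \<epsilon>}) \<longlonglongrightarrow> 0"
          using tendsto_add[OF g1 g2] by simp
      qed
      then show "(\<lambda>n. prob {\<omega> \<in> space M. \<epsilon> < \<bar>enn2real (X \<omega> (Ks n)) - enn2real (X \<omega> K)\<bar>}) \<longlonglongrightarrow> 0"
        unfolding Y_def Z_def .
    qed
  qed
qed

end
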